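(* Let $\mathbf{M}^*\in\mathbb{R}^{d_1\times d_2}$ have rank $r$, let $f(\mathbf{U},\mathbf{V})=\frac12\|\mathbf{U}\mathbf{V}^\top-\mathbf{M}^*\|_F^2$ for $\mathbf{U}\in\mathbb{R}^{d_1\times r}$, $\mathbf{V}\in\mathbb{R}^{d_2\times r}$, and let $\epsilon>0$. Suppose $(\mathbf{U},\mathbf{V})$ is a stationary point of $f$ such that $\|\mathbf{U}^\top\mathbf{U}-\mathbf{V}^\top\mathbf{V}\|_F\le\epsilon$. Then either $\|\mathbf{U}\mathbf{V}^\top-\mathbf{M}^*\|_F\le\epsilon$, or $(\mathbf{U},\mathbf{V})$ is a strict saddle point of $f$.
   Context: A stationary point is a point where the gradient of $f$ vanishes. A saddle point of $f$ is strict if the Hessian of $f$ at that point has a negative eigenvalue. $\|\cdot\|_F$ is the Frobenius norm. *)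

theory Defs
  imports "HOL-Analysis.Analysis"
begin

definition frob_norm :: "real^'n^'m \<Rightarrow> real" where
  "frob_norm A = sqrt (\<Sum>i\<in>UNIV. \<Sum>j\<in>UNIV. (A $ i $ j)\<^sup>2)"

definition mf_obj :: "real^'d2^'d1 \<Rightarrow> ((real^'r^'d1) \<times> (real^'r^'d2)) \<Rightarrow> real" where
  "mf_obj M = (\<lambda>(U, V). (1/2) * (frob_norm (U ** transpose V - M))\<^sup>2)"

definition stationary_point :: "('a::euclidean_space \<Rightarrow> real) \<Rightarrow> 'a \<Rightarrow> bool" where
  "stationary_point f x \<longleftrightarrow> (f has_derivative (\<lambda>h. 0)) (at x)"

definition is_hessian :: "('a::euclidean_space \<Rightarrow> real) \<Rightarrow> 'a \<Rightarrow> ('a \<Rightarrow> 'a) \<Rightarrow> bool" where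
  "is_hessian f x H \<longleftrightarrow> (\<exists>g. (\<forall>y. (f has_derivative (\<lambda>h. g y \<bullet> h)) (at y))
                              \<and> (g has_derivative H) (at x))"

definition strict_saddle :: "('a::euclidean_space \<Rightarrow> real) \<Rightarrow> 'a \<Rightarrow> bool" where
  "strict_saddle f x \<longleftrightarrow> stationary_point f x \<and>
     (\<exists>H. is_hessian f x H \<and> (\<exists>c v. c < 0 \<and> v \<noteq> 0 \<and> H v = c *\<^sub>R v))"

end

theory Submission
  imports Defs
begin

lemma inner_mat: "(X::real^'n^'m) \<bullet> Y = (\<Sum>i\<in>UNIV. \<Sum>j\<in>UNIV. X$i$j * Y$i$j)"
  by (simp add: inner_vec_def)

lemma frob_eq: "frob_norm X = norm X"
  by (simp add: frob_norm_def norm_eq_sqrt_inner inner_mat power2_eq_square)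

lemma inner_mul_right:
  fixes X :: "real^'n^'m" and A :: "real^'k^'m" and Y :: "real^'n^'k"
  shows "X \<bullet> (A ** Y) = (X ** transpose Y) \<bullet> A"
  unfolding inner_mat matrix_matrix_mult_def transpose_def
  by (simp add: sum_distrib_left sum_distrib_right mult_ac sum.swap[of _ "UNIV::'k set"])

lemma inner_transpose: "transpose (X::real^'n^'m) \<bullet> transpose Y = X \<bullet> Y"
  unfolding inner_mat transpose_def by (simp add: sum.swap[of _ "UNIV::'n set"])

lemma inner_mul_left:
  fixes X :: "real^'n^'m" and Y :: "real^'k^'m" and B :: "real^'n^'k"
  shows "X \<bullet> (Y ** B) = (transpose Y ** X) \<bullet> B"
proof -
  have "X \<bullet> (Y ** B) = transpose X \<bullet> (transpose B ** transpose Y)"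
    by (metis inner_transpose matrix_transpose_mul)
  also have "\<dots> = (transpose X ** transpose (transpose Y)) \<bullet> transpose B"
    by (rule inner_mul_right)
  also have "\<dots> = (transpose Y ** X) \<bullet> B"
    by (metis inner_transpose matrix_transpose_mul transpose_transpose)
  finally show ?thesis .
qed

lemma bilinear_mm: "bilinear ((**) :: real^'k^'m \<Rightarrow> real^'n^'k \<Rightarrow> real^'n^'m)"
  by (auto simp: bilinear_def linear_iff vec_eq_iff matrix_matrix_mult_def sum.distrib
      algebra_simps sum_distrib_left)

lemma bb_mm: "bounded_bilinear ((**) :: real^'k^'m \<Rightarrow> real^'n^'k \<Rightarrow> real^'n^'m)"
  using bilinear_mm bilinear_conv_bounded_bilinear by blast

lemma bl_transpose: "bounded_linear (transpose :: real^'n^'m \<Rightarrow> real^'m^'n)"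
  unfolding linear_conv_bounded_linear[symmetric] by (auto simp: linear_iff vec_eq_iff transpose_def)

definition Em :: "real^'d2^'d1 \<Rightarrow> (real^'r^'d1) \<times> (real^'r^'d2) \<Rightarrow> real^'d2^'d1" where
  "Em M p = fst p ** transpose (snd p) - M"

definition grad :: "real^'d2^'d1 \<Rightarrow> (real^'r^'d1) \<times> (real^'r^'d2) \<Rightarrow> (real^'r^'d1) \<times> (real^'r^'d2)" where
  "grad M p = (Em M p ** snd p, transpose (Em M p) ** fst p)"

definition dEm :: "(real^'r^'d1) \<times> (real^'r^'d2) \<Rightarrow> (real^'r^'d1) \<times> (real^'r^'d2) \<Rightarrow> real^'d2^'d1" where
  "dEm p h = fst h ** transpose (snd p) + fst p ** transpose (snd h)"

definition hess :: "real^'d2^'d1 \<Rightarrow> (real^'r^'d1) \<times> (real^'r^'d2) \<Rightarrow> (real^'r^'d1) \<times> (real^'r^'d2) \<Rightarrow> (real^'r^'d1) \<times> (real^'r^'d2)" where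
  "hess M p h = (Em M p ** snd h + dEm p h ** snd p, transpose (Em M p) ** fst h + transpose (dEm p h) ** fst p)"

lemma Em_deriv:
  fixes p :: "(real^'r^'d1) \<times> (real^'r^'d2)" and M :: "real^'d2^'d1"
  shows "(Em M has_derivative dEm p) (at p within S)"
proof -
  have a: "((\<lambda>p::(real^'r^'d1) \<times> (real^'r^'d2). fst p ** transpose (snd p)) has_derivative
       (\<lambda>h. fst p ** transpose (snd h) + fst h ** transpose (snd p))) (at p within S)"
    using bounded_bilinear.FDERIV[OF bb_mm has_derivative_fst[OF has_derivative_ident] bounded_linear.has_derivative[OF bl_transpose has_derivative_snd[OF has_derivative_ident]], of p S]
    by simp
  have "((\<lambda>p. fst p ** transpose (snd p) - M) has_derivative
       (\<lambda>h. (fst p ** transpose (snd h) + fst h ** transpose (snd p)) - 0)) (at p within S)"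
    by (rule has_derivative_diff[OF a has_derivative_const])
  then have "((\<lambda>p. fst p ** transpose (snd p) - M) has_derivative
       (\<lambda>h. fst h ** transpose (snd p) + fst p ** transpose (snd h))) (at p within S)"
    by (simp add: add.commute)
  then show ?thesis unfolding Em_def[abs_def] dEm_def[abs_def] .
qed
lemma mf_eq: "mf_obj (M::real^'d2^'d1) = (\<lambda>p. (1/2) * (Em M p \<bullet> Em M p))"
  by (auto simp: fun_eq_iff mf_obj_def frob_eq Em_def power2_norm_eq_inner split: prod.split)

lemma grad_inner:
  fixes p h :: "(real^'r^'d1) \<times> (real^'r^'d2)" and M :: "real^'d2^'d1"
  shows "Em M p \<bullet> dEm p h = grad M p \<bullet> h"
proof -
  obtain U V where p: "p = (U,V)" by fastforce
  obtain A B where h: "h = (A,B)" by fastforce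
  have "Em M p \<bullet> (U ** transpose B) = (transpose U ** Em M p) \<bullet> transpose B"
    by (rule inner_mul_left)
  also have "\<dots> = transpose (transpose (Em M p) ** U) \<bullet> transpose B"
    by (simp add: matrix_transpose_mul)
  also have "\<dots> = (transpose (Em M p) ** U) \<bullet> B" by (rule inner_transpose)
  finally have 1: "Em M p \<bullet> (U ** transpose B) = (transpose (Em M p) ** U) \<bullet> B" .
  have 2: "Em M p \<bullet> (A ** transpose V) = (Em M p ** V) \<bullet> A"
    using inner_mul_right[of "Em M p" A "transpose V"] by simp
  have d: "dEm p h = A ** transpose V + U ** transpose B"
    unfolding dEm_def p h by simp
  have "Em M p \<bullet> dEm p h = Em M p \<bullet> (A ** transpose V) + Em M p \<bullet> (U ** transpose B)"
    by (simp only: d inner_add_right)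
  also have "\<dots> = grad M p \<bullet> h"
  proof -
    have sp: "snd p = V" "fst p = U" using p by auto
    show ?thesis unfolding grad_def h inner_Pair sp by (simp only: 1 2)
  qed
  finally show ?thesis .
qed

lemma f_deriv:
  fixes p :: "(real^'r^'d1) \<times> (real^'r^'d2)" and M :: "real^'d2^'d1"
  shows "(mf_obj M has_derivative (\<lambda>h. grad M p \<bullet> h)) (at p)"
proof -
  have "((\<lambda>p. (1/2) * (Em M p \<bullet> Em M p)) has_derivative (\<lambda>h. (1/2) * (Em M p \<bullet> dEm p h + dEm p h \<bullet> Em M p) + 0 * (Em M p \<bullet> Em M p))) (at p)"
    by (rule has_derivative_mult[OF has_derivative_const has_derivative_inner[OF Em_deriv Em_deriv]])
  moreover have "(\<lambda>h. (1/2) * (Em M p \<bullet> dEm p h + dEm p h \<bullet> Em M p) + 0 * (Em M p \<bullet> Em M p)) = (\<lambda>h. grad M p \<bullet> h)"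
  proof
    fix h
    have "dEm p h \<bullet> Em M p = Em M p \<bullet> dEm p h" by (rule inner_commute)
    then show "(1/2) * (Em M p \<bullet> dEm p h + dEm p h \<bullet> Em M p) + 0 * (Em M p \<bullet> Em M p) = grad M p \<bullet> h"
      using grad_inner[of M p h] by simp
  qed
  ultimately show ?thesis unfolding mf_eq by simp
qed

lemma grad_deriv:
  fixes p :: "(real^'r^'d1) \<times> (real^'r^'d2)" and M :: "real^'d2^'d1"
  shows "(grad M has_derivative hess M p) (at p)"
proof -
  have 1: "((\<lambda>p. Em M p ** snd p) has_derivative (\<lambda>h. Em M p ** snd h + dEm p h ** snd p)) (at p)"
    using bounded_bilinear.FDERIV[OF bb_mm Em_deriv[of M p UNIV] has_derivative_snd[OF has_derivative_ident]] by simp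
  have 2: "((\<lambda>p. transpose (Em M p) ** fst p) has_derivative (\<lambda>h. transpose (Em M p) ** fst h + transpose (dEm p h) ** fst p)) (at p)"
    using bounded_bilinear.FDERIV[OF bb_mm bounded_linear.has_derivative[OF bl_transpose Em_deriv[of M p UNIV]] has_derivative_fst[OF has_derivative_ident]] by simp
  show ?thesis unfolding grad_def[abs_def] hess_def[abs_def]
    using has_derivative_Pair[OF 1 2] by simp
qed

lemma neg_eig:
  fixes H :: "'a::euclidean_space \<Rightarrow> 'a"
  assumes lin: "linear H" and sym: "\<And>x y. H x \<bullet> y = x \<bullet> H y" and w: "w \<bullet> H w < 0"
  shows "\<exists>c v. c < 0 \<and> v \<noteq> 0 \<and> H v = c *\<^sub>R v"
proof -
  have bl: "bounded_linear H" using lin linear_conv_bounded_linear by blast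
  have w0: "w \<noteq> 0" using w lin by (auto simp: linear_0)
  define q where "q v = v \<bullet> H v" for v
  have cont: "continuous_on (sphere 0 1) q"
    unfolding q_def by (intro continuous_intros bounded_linear.continuous_on[OF bl])
  have wn: "w /\<^sub>R norm w \<in> sphere 0 1" using w0 by simp
  obtain v0 where v0: "v0 \<in> sphere 0 1" and vmin: "\<And>y. y \<in> sphere 0 1 \<Longrightarrow> q v0 \<le> q y"
    using continuous_attains_inf[OF compact_sphere _ cont] wn by blast
  define c where "c = q v0"
  have qscale: "q (a *\<^sub>R v) = a\<^sup>2 * q v" for a v
    unfolding q_def by (simp add: linear_scale[OF lin] power2_eq_square)
  have "c \<le> q (w /\<^sub>R norm w)" unfolding c_def using vmin[OF wn] .
  also have "\<dots> = q w / (norm w)\<^sup>2" using qscale[of "inverse (norm w)" w]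
    by (simp add: power2_eq_square field_simps)
  also have "\<dots> < 0" using w w0 unfolding q_def by (simp add: divide_neg_pos)
  finally have c0: "c < 0" .
  have qge: "q x \<ge> c * (x \<bullet> x)" for x
  proof (cases "x = 0")
    case True then show ?thesis by (simp add: q_def linear_0[OF lin])
  next
    case False
    have "c \<le> q (x /\<^sub>R norm x)" unfolding c_def using vmin False by simp
    also have "\<dots> = q x / (x \<bullet> x)" using qscale[of "inverse (norm x)" x] False
      by (simp add: power2_eq_square field_simps power2_norm_eq_inner[symmetric])
    finally show ?thesis using False by (simp add: field_simps)
  qed
  have nv0: "v0 \<bullet> v0 = 1" using v0 by (simp add: power2_norm_eq_inner[symmetric])
  define K where "K y = H y - c *\<^sub>R y" for y
  have Ksym: "K x \<bullet> y = x \<bullet> K y" for x y unfolding K_def inner_diff_left inner_diff_right sym by simp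
  have Kpos: "x \<bullet> K x \<ge> 0" for x using qge[of x] unfolding K_def q_def by (simp add: inner_diff_right)
  have Kv0: "v0 \<bullet> K v0 = 0" unfolding K_def using nv0 by (simp add: inner_diff_right c_def q_def)
  have Klin: "K (x - t *\<^sub>R y) = K x - t *\<^sub>R K y" for x y t
    unfolding K_def by (simp add: linear_diff[OF lin] linear_scale[OF lin] algebra_simps)
  define z where "z = K v0"
  have "z = 0"
  proof (rule ccontr)
    assume z0: "z \<noteq> 0"
    define n where "n = z \<bullet> z"
    define k where "k = z \<bullet> K z"
    have n0: "n > 0" using z0 by (simp add: n_def)
    have k0: "k \<ge> 0" using Kpos by (simp add: k_def)
    have exp: "(v0 - t *\<^sub>R z) \<bullet> K (v0 - t *\<^sub>R z) = t\<^sup>2 * k - 2 * t * n" for t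
    proof -
      have "v0 \<bullet> K z = n" using Ksym[of v0 z] by (simp add: z_def n_def)
      then show ?thesis unfolding Klin using Kv0
        by (simp add: inner_diff_left inner_diff_right k_def n_def z_def power2_eq_square algebra_simps)
    qed
    define t where "t = n / (k + 1)"
    have t0: "t > 0" using n0 k0 by (simp add: t_def)
    have "0 \<le> t\<^sup>2 * k - 2 * t * n" using Kpos exp by metis
    then have "2 * n \<le> t * k" using t0 by (simp add: power2_eq_square algebra_simps)
    then have "2 * n * (k+1) \<le> n * k" using k0 by (simp add: t_def field_simps)
    moreover have "n * k \<ge> 0" using n0 k0 by simp
    ultimately show False using n0 by (simp add: algebra_simps)
  qed
  then have "H v0 = c *\<^sub>R v0" by (simp add: z_def K_def)
  moreover have "v0 \<noteq> 0" using v0 by auto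
  ultimately show ?thesis using c0 by blast
qed

lemma inner_mv_left: "((A::real^'n^'m) *v x) \<bullet> y = x \<bullet> (transpose A *v y)"
  by (metis dot_lmul_matrix vector_transpose_matrix)

lemma rank_lemma:
  fixes U :: "real^'r^'d1" and V :: "real^'r^'d2" and M E :: "real^'d2^'d1"
  assumes rk: "rank M = CARD('r)" and E: "E = U ** transpose V - M"
    and EV: "E ** V = 0" and EU: "transpose E ** U = 0"
    and iU: "inj ((*v) U)" and iV: "inj ((*v) V)"
  shows "E = 0"
proof -
  define RU where "RU = range ((*v) U)"
  define RE where "RE = range ((*v) E)"
  define RM where "RM = range ((*v) M)"
  have sRU: "subspace RU" unfolding RU_def by (rule linear_subspace_image) auto
  have sRE: "subspace RE" unfolding RE_def by (rule linear_subspace_image) auto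
  have sRM: "subspace RM" unfolding RM_def by (rule linear_subspace_image) auto
  have dRU: "dim RU = CARD('r)"
  proof -
    have "dim RU = dim (UNIV :: (real^'r) set)" unfolding RU_def
      by (rule dim_image_eq) (auto intro: inj_on_subset[OF iU])
    then show ?thesis by simp
  qed
  define G where "G = transpose V ** V"
  have iG: "inj ((*v) G)"
  proof -
    have "y = 0" if "G *v y = 0" for y
    proof -
      have "(V *v y) \<bullet> (V *v y) = y \<bullet> (G *v y)" unfolding G_def
        by (simp add: inner_mv_left matrix_vector_mul_assoc)
      then have "V *v y = 0" using that by simp
      then show ?thesis using iV by (metis injD matrix_vector_mult_0_right)
    qed
    then show ?thesis by (simp add: linear_injective_0)
  qed
  have sG: "surj ((*v) G)" by (rule linear_inj_imp_surj[OF _ iG]) auto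
  have MV: "M ** V = U ** G"
  proof -
    have "M = U ** transpose V - E" using E by simp
    then have "M ** V = U ** transpose V ** V - E ** V" by (simp add: bounded_bilinear.diff_left[OF bb_mm])
    then show ?thesis using EV by (simp add: G_def matrix_mul_assoc)
  qed
  have UM: "RU \<subseteq> RM"
  proof
    fix x assume "x \<in> RU"
    then obtain w where x: "x = U *v w" unfolding RU_def by auto
    obtain y where y: "w = G *v y" using sG by (metis surjD)
    have "x = M *v (V *v y)" unfolding x y by (simp add: matrix_vector_mul_assoc MV)
    then show "x \<in> RM" unfolding RM_def by auto
  qed
  have EM: "RE \<subseteq> RM"
  proof
    fix x assume "x \<in> RE"
    then obtain b where x: "x = E *v b" unfolding RE_def by auto
    have x2: "x = (U ** transpose V) *v b - M *v b" unfolding x E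
      by (rule matrix_vector_mult_diff_rdistrib)
    have "(U ** transpose V) *v b = U *v (transpose V *v b)"
      by (rule matrix_vector_mul_assoc[symmetric])
    also have "\<dots> \<in> RU" unfolding RU_def by (rule rangeI)
    finally have "(U ** transpose V) *v b \<in> RM" using UM by blast
    moreover have "M *v b \<in> RM" unfolding RM_def by auto
    ultimately show "x \<in> RM" using sRM x2 by (simp add: subspace_diff)
  qed
  have Int: "RU \<inter> RE \<subseteq> {0}"
  proof
    fix x assume "x \<in> RU \<inter> RE"
    then have "x \<in> RU" "x \<in> RE" by auto
    then obtain a b where xa: "x = U *v a" and xb: "x = E *v b" unfolding RU_def RE_def by blast
    have "transpose U ** E = transpose (transpose E ** U)" by (simp add: matrix_transpose_mul)
    also have "\<dots> = 0" using EU by (simp add: transpose_def vec_eq_iff)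
    finally have UE: "transpose U ** E = 0" .
    have "x \<bullet> x = (U *v a) \<bullet> (E *v b)" using xa xb by simp
    also have "\<dots> = a \<bullet> (transpose U *v (E *v b))" by (rule inner_mv_left)
    also have "\<dots> = a \<bullet> ((transpose U ** E) *v b)" by (simp only: matrix_vector_mul_assoc)
    also have "\<dots> = 0" using UE by simp
    finally have "x \<bullet> x = 0" .
    then show "x \<in> {0}" by simp
  qed
  have "{x + y |x y. x \<in> RU \<and> y \<in> RE} \<subseteq> RM"
    using UM EM sRM by (auto intro: subspace_add)
  then have "dim {x + y |x y. x \<in> RU \<and> y \<in> RE} \<le> dim RM" by (rule dim_subset)
  moreover have "dim RM = CARD('r)" using rk by (simp add: rank_dim_range RM_def)
  moreover have "dim (RU \<inter> RE) = 0" using Int by simp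
  moreover note dim_sums_Int[OF sRU sRE]
  ultimately have "dim RE = 0" using dRU by linarith
  then have "\<forall>x. E *v x = 0" unfolding RE_def by auto
  then show ?thesis by (simp add: matrix_eq)
qed

lemma inner_mul_rT:
  fixes X :: "real^'n^'m" and A :: "real^'k^'m" and Y :: "real^'k^'n"
  shows "X \<bullet> (A ** transpose Y) = (X ** Y) \<bullet> A"
  using inner_mul_right[of X A "transpose Y"] by simp

lemma inner_mul_lT:
  fixes X :: "real^'n^'m" and U :: "real^'k^'m" and B :: "real^'k^'n"
  shows "X \<bullet> (U ** transpose B) = (transpose X ** U) \<bullet> B"
proof -
  have "X \<bullet> (U ** transpose B) = (transpose U ** X) \<bullet> transpose B"
    by (rule inner_mul_left)
  also have "\<dots> = transpose (transpose X ** U) \<bullet> transpose B"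
    by (simp add: matrix_transpose_mul)
  also have "\<dots> = (transpose X ** U) \<bullet> B" by (rule inner_transpose)
  finally show ?thesis .
qed

lemma hess_inner:
  fixes p h k :: "(real^'r^'d1) \<times> (real^'r^'d2)" and M :: "real^'d2^'d1"
  shows "hess M p h \<bullet> k = dEm p h \<bullet> dEm p k + Em M p \<bullet> (fst k ** transpose (snd h) + fst h ** transpose (snd k))"
proof -
  obtain U V where p: "p = (U,V)" by fastforce
  obtain A B where h: "h = (A,B)" by fastforce
  obtain A' B' where k: "k = (A',B')" by fastforce
  define D where "D = dEm p h"
  define E where "E = Em M p"
  have dk: "dEm p k = A' ** transpose V + U ** transpose B'" unfolding dEm_def p k by simp
  have "hess M p h \<bullet> k = (E ** B) \<bullet> A' + (D ** V) \<bullet> A' + ((transpose E ** A) \<bullet> B' + (transpose D ** U) \<bullet> B')"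
    unfolding hess_def p h k D_def E_def by (simp add: inner_add_left)
  also have "\<dots> = E \<bullet> (A' ** transpose B) + D \<bullet> (A' ** transpose V) + (E \<bullet> (A ** transpose B') + D \<bullet> (U ** transpose B'))"
    by (simp only: inner_mul_rT[of E A' B] inner_mul_rT[of D A' V] inner_mul_lT[of E A B'] inner_mul_lT[of D U B'])
  also have "\<dots> = D \<bullet> dEm p k + E \<bullet> (A' ** transpose B + A ** transpose B')"
    unfolding dk by (simp add: inner_add_right)
  finally show ?thesis unfolding D_def E_def h k by simp
qed

lemma hess_sym:
  fixes p h k :: "(real^'r^'d1) \<times> (real^'r^'d2)" and M :: "real^'d2^'d1"
  shows "hess M p h \<bullet> k = h \<bullet> hess M p k"
proof -
  have "h \<bullet> hess M p k = hess M p k \<bullet> h" by (rule inner_commute)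
  then show ?thesis unfolding hess_inner
    by (simp add: inner_commute[of "dEm p h"] add.commute)
qed

definition outer :: "real^'m \<Rightarrow> real^'n \<Rightarrow> real^'n^'m" where
  "outer a b = (\<chi> i j. a$i * b$j)"

lemma outer_mul: "outer a q ** transpose (outer b q') = (q \<bullet> q') *\<^sub>R outer a b"
  by (simp add: vec_eq_iff matrix_matrix_mult_def outer_def transpose_def inner_vec_def
      sum_distrib_left sum_distrib_right mult_ac)

lemma mul_outer: "U ** transpose (outer b q) = outer (U *v q) b"
  by (simp add: vec_eq_iff matrix_matrix_mult_def outer_def transpose_def matrix_vector_mult_def
      sum_distrib_left sum_distrib_right mult_ac)

lemma outer_mul2: "outer a q ** transpose V = outer a (V *v q)"
  by (simp add: vec_eq_iff matrix_matrix_mult_def outer_def transpose_def matrix_vector_mult_def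
      sum_distrib_left sum_distrib_right mult_ac)

lemma inner_outer: "X \<bullet> outer a b = a \<bullet> (X *v b)"
  by (simp add: inner_vec_def outer_def matrix_vector_mult_def sum_distrib_left mult_ac)

lemma outer_zero[simp]: "outer 0 b = 0" "outer a 0 = 0"
  by (simp_all add: outer_def vec_eq_iff)

lemma outer_scale: "outer (s *\<^sub>R a) b = s *\<^sub>R outer a b"
  by (simp add: outer_def vec_eq_iff)

lemma neg_dir:
  fixes U :: "real^'r^'d1" and V :: "real^'r^'d2" and M :: "real^'d2^'d1"
  assumes E0: "Em M (U,V) \<noteq> 0" and q0: "q \<noteq> 0" and Vq: "U *v q = 0 \<or> V *v q = 0"
  shows "\<exists>w. w \<bullet> hess M (U,V) w < 0"
proof -
  define E where "E = Em M (U,V)"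
  obtain b where Eb: "E *v b \<noteq> 0" using E0 unfolding E_def by (metis matrix_eq matrix_vector_mult_0)
  define a where "a = E *v b"
  define c where "c = (q \<bullet> q) * (a \<bullet> a)"
  have c0: "c > 0" using q0 Eb unfolding c_def a_def by (simp add: mult_pos_pos)
  have key: "(s *\<^sub>R outer a q, t *\<^sub>R outer b q) \<bullet> hess M (U,V) (s *\<^sub>R outer a q, t *\<^sub>R outer b q)
      = N \<bullet> N + 2 * s * t * c" if N: "N = dEm (U,V) (s *\<^sub>R outer a q, t *\<^sub>R outer b q)" for s t N
  proof -
    let ?w = "(s *\<^sub>R outer a q, t *\<^sub>R outer b q)"
    have AB: "s *\<^sub>R outer a q ** transpose (t *\<^sub>R outer b q) = (s * t * (q \<bullet> q)) *\<^sub>R outer a b"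
      by (simp add: transpose_scalar bounded_bilinear.scaleR_left[OF bb_mm] bounded_bilinear.scaleR_right[OF bb_mm] outer_mul)
    have "?w \<bullet> hess M (U,V) ?w = hess M (U,V) ?w \<bullet> ?w" by (rule inner_commute)
    also have "\<dots> = N \<bullet> N + 2 * ((s * t * (q \<bullet> q)) * (E \<bullet> outer a b))"
      unfolding hess_inner fst_conv snd_conv AB inner_add_right inner_scaleR_right N[symmetric] E_def[symmetric]
      by simp
    also have "\<dots> = N \<bullet> N + 2 * s * t * c"
      by (simp add: inner_outer c_def a_def E_def)
    finally show ?thesis .
  qed
  show ?thesis using Vq
  proof
    assume Uq: "U *v q = 0"
    define N where "N = outer a (V *v q)"
    define t where "t = - (N \<bullet> N + 1) / (2 * c)"
    have "N = dEm (U,V) (1 *\<^sub>R outer a q, t *\<^sub>R outer b q)"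
      unfolding dEm_def N_def by (simp add: transpose_scalar bounded_bilinear.scaleR_right[OF bb_mm] mul_outer outer_mul2 Uq)
    from key[OF this] have "(1 *\<^sub>R outer a q, t *\<^sub>R outer b q) \<bullet> hess M (U,V) (1 *\<^sub>R outer a q, t *\<^sub>R outer b q) = -1"
      using c0 by (simp add: t_def field_simps)
    then show ?thesis by (intro exI[of _ "(1 *\<^sub>R outer a q, t *\<^sub>R outer b q)"]) simp
  next
    assume Vq: "V *v q = 0"
    define N where "N = outer (U *v q) b"
    define s where "s = - (N \<bullet> N + 1) / (2 * c)"
    have "N = dEm (U,V) (s *\<^sub>R outer a q, 1 *\<^sub>R outer b q)"
      unfolding dEm_def N_def by (simp add: bounded_bilinear.scaleR_left[OF bb_mm] mul_outer outer_mul2 Vq)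
    from key[OF this] have "(s *\<^sub>R outer a q, 1 *\<^sub>R outer b q) \<bullet> hess M (U,V) (s *\<^sub>R outer a q, 1 *\<^sub>R outer b q) = -1"
      using c0 by (simp add: s_def field_simps)
    then show ?thesis by (intro exI[of _ "(s *\<^sub>R outer a q, 1 *\<^sub>R outer b q)"]) simp
  qed
qed

theorem lemma3p2:
  fixes M :: "real^'d2^'d1" and U :: "real^'r^'d1" and V :: "real^'r^'d2" and \<epsilon> :: real
  assumes "rank M = CARD('r)"
    and "\<epsilon> > 0"
    and "stationary_point (mf_obj M) (U, V)"
    and "frob_norm (transpose U ** U - transpose V ** V) \<le> \<epsilon>"
  shows "frob_norm (U ** transpose V - M) \<le> \<epsilon> \<or> strict_saddle (mf_obj M) (U, V)"
proof (cases "frob_norm (U ** transpose V - M) \<le> \<epsilon>")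
  case True then show ?thesis by simp
next
  case nle: False
  have E0: "Em M (U,V) \<noteq> 0"
  proof
    assume "Em M (U,V) = 0"
    then have "U ** transpose V - M = 0" by (simp add: Em_def)
    then show False using nle assms(2) by (simp add: frob_eq)
  qed
  have st: "(mf_obj M has_derivative (\<lambda>h. 0)) (at (U,V))"
    using assms(3) unfolding stationary_point_def .
  have "(\<lambda>h. grad M (U,V) \<bullet> h) = (\<lambda>h. 0)"
    by (rule has_derivative_unique[OF f_deriv st])
  then have "grad M (U,V) \<bullet> grad M (U,V) = 0" by metis
  then have g0: "grad M (U,V) = 0" by simp
  then have EV: "Em M (U,V) ** V = 0" and EU: "transpose (Em M (U,V)) ** U = 0"
    unfolding grad_def by (simp_all add: zero_prod_def)
  have "\<not> (inj ((*v) U) \<and> inj ((*v) V))"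
  proof
    assume "inj ((*v) U) \<and> inj ((*v) V)"
    then have "Em M (U,V) = 0"
      using rank_lemma[OF assms(1) _ EV EU] by (simp add: Em_def)
    then show False using E0 by simp
  qed
  then obtain q where q0: "q \<noteq> 0" and Uq: "U *v q = 0 \<or> V *v q = 0"
    by (metis linear_injective_0 matrix_vector_mul_linear)
  obtain w where w: "w \<bullet> hess M (U,V) w < 0" using neg_dir[OF E0 q0 Uq] by blast
  have lin: "linear (hess M (U,V))"
    using has_derivative_bounded_linear[OF grad_deriv] bounded_linear.linear by blast
  obtain c v where cv: "c < 0" "v \<noteq> 0" "hess M (U,V) v = c *\<^sub>R v"
    using neg_eig[OF lin hess_sym w] by blast
  have "is_hessian (mf_obj M) (U,V) (hess M (U,V))"
    unfolding is_hessian_def using f_deriv grad_deriv by blast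
  then have "strict_saddle (mf_obj M) (U, V)"
    unfolding strict_saddle_def using assms(3) cv by blast
  then show ?thesis by simp
qed

end
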